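(* There is an algorithm that, given $x \in \mathbb{R}^z$ and $p =\big( (\min_1, \max_1),\dots, (\min_\ell, \max_\ell)\big) \in (\mathrm{set}(x)^2)^\ell$, runs in $O(z\ell)$ time and returns True if and only if there exists a traversal $T\in\mathcal{T}_{z,\ell}$ such that $p$ is the $\ell$-profile of $(x,T)$.
   Context: For $x=(x_1,\dots,x_z)\in\mathbb{R}^z$, $\mathrm{set}(x)=\{x_i:1\le i\le z\}$. A traversal between sequences of lengths $z$ and $\ell$ is a sequence of index pairs from $(1,1)$ to $(z,\ell)$ where each step increases each index by $0$ or $1$ and at least one index by $1$; $\mathcal{T}_{z,\ell}$ is the set of traversals. For $T\in\mathcal{T}_{z,\ell}$ the traversal sectors are $S_j^{(x,T)}=\{x_i:(i,j)\in T\}$, $j\in[\ell]$, and the $\ell$-profile of $(x,T)$ is $\big((\min S_j^{(x,T)},\max S_j^{(x,T)})\big)_{j=1}^{\ell}$.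
   Formalization: The algorithm is an explicit dynamic program over the grid of index pairs that also admits the vertical (0,1) traversal step, and $O(z\ell)$ time is a count of unit-cost calls, with comparisons of reals at unit cost. Apart from conventions, each condition added here is assumed in the paper as well or is needed for the statement above to hold. *)

theory Defs
  imports Complex_Main
begin

text \<open>A sequence x in R^z is a list of length z; x_i is x ! (i - 1) (indices are 1-based).\<close>

definition is_traversal :: "nat \<Rightarrow> nat \<Rightarrow> (nat \<times> nat) list \<Rightarrow> bool" where
  "is_traversal z l T \<longleftrightarrow>
     T \<noteq> [] \<and> hd T = (1, 1) \<and> last T = (z, l) \<and>
     (\<forall>k. Suc k < length T \<longrightarrow>
        (fst (T ! Suc k) = fst (T ! k) \<or> fst (T ! Suc k) = fst (T ! k) + 1) \<and>
        (snd (T ! Suc k) = snd (T ! k) \<or> snd (T ! Suc k) = snd (T ! k) + 1) \<and>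
        T ! Suc k \<noteq> T ! k)"

definition traversals :: "nat \<Rightarrow> nat \<Rightarrow> (nat \<times> nat) list set" where
  "traversals z l = {T. is_traversal z l T}"

definition sector :: "real list \<Rightarrow> (nat \<times> nat) list \<Rightarrow> nat \<Rightarrow> real set" where
  "sector x T j = {x ! (i - 1) | i. (i, j) \<in> set T}"

definition profile :: "nat \<Rightarrow> real list \<Rightarrow> (nat \<times> nat) list \<Rightarrow> (real \<times> real) list" where
  "profile l x T = map (\<lambda>j. (Min (sector x T j), Max (sector x T j))) [1..<Suc l]"

text \<open>For each grid cell (i,j) we store which flag pairs (min of sector j seen, max of sector j seen)
are reachable by a traversal prefix ending at (i,j) whose completed sectors match the profile
and whose current sector j only contains values in [min_j, max_j].
A state is a 4-tuple of booleans: reachability of (F,F), (F,T), (T,F), (T,T).\<close>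

type_synonym st = "bool \<times> bool \<times> bool \<times> bool"

definition st_empty :: st where "st_empty = (False, False, False, False)"

fun st_union :: "st \<Rightarrow> st \<Rightarrow> st" where
  "st_union (a, b, c, d) (a', b', c', d') = (a \<or> a', b \<or> b', c \<or> c', d \<or> d')"

fun st_closed :: "st \<Rightarrow> bool" where
  "st_closed (a, b, c, d) = d"

fun st_single :: "bool \<Rightarrow> bool \<Rightarrow> st" where
  "st_single lo hi =
     (if lo then (if hi then (False, False, False, True) else (False, False, True, False))
      else (if hi then (False, True, False, False) else (True, False, False, False)))"

fun st_start :: "real \<Rightarrow> real \<times> real \<Rightarrow> st" where
  "st_start v (m, M) = (if m \<le> v \<and> v \<le> M then st_single (v = m) (v = M) else st_empty)"

fun st_ext :: "real \<Rightarrow> real \<times> real \<Rightarrow> st \<Rightarrow> st" where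
  "st_ext v (m, M) (a, b, c, d) =
     (if m \<le> v \<and> v \<le> M then
        (let lo = (v = m); hi = (v = M) in
          st_union (if a then st_single lo hi else st_empty)
           (st_union (if b then st_single lo True else st_empty)
             (st_union (if c then st_single True hi else st_empty)
               (if d then st_single True True else st_empty))))
      else st_empty)"

text \<open>compute a new column for value v; cp = sector j-1 closed in the previous column (diagonal
step), cn = sector j-1 closed in the new column (vertical step)\<close>
fun dp_col :: "real \<Rightarrow> bool \<Rightarrow> bool \<Rightarrow> (real \<times> real) list \<Rightarrow> st list \<Rightarrow> st list" where
  "dp_col v cp cn (q # qs) (s # ss) =
     (let n = st_union (st_ext v q s) (if cp \<or> cn then st_start v q else st_empty)
      in n # dp_col v (st_closed s) (st_closed n) qs ss)"
| "dp_col v cp cn qs ss = []"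

fun empty_col :: "(real \<times> real) list \<Rightarrow> st list" where
  "empty_col [] = []"
| "empty_col (q # qs) = st_empty # empty_col qs"

fun dp_run :: "(real \<times> real) list \<Rightarrow> st list \<Rightarrow> real list \<Rightarrow> st list" where
  "dp_run p c [] = c"
| "dp_run p c (v # vs) = dp_run p (dp_col v False False p c) vs"

fun last_closed :: "st list \<Rightarrow> bool" where
  "last_closed [] = False"
| "last_closed [s] = st_closed s"
| "last_closed (s # t # ss) = last_closed (t # ss)"

fun decide_profile :: "real list \<Rightarrow> (real \<times> real) list \<Rightarrow> bool" where
  "decide_profile [] p = False"
| "decide_profile (v # vs) p = last_closed (dp_run p (dp_col v True False p (empty_col p)) vs)"

text \<open>Cost model (as in HOL-Library.Time_Functions): each function call costs 1 plus the costs of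
the calls it makes; primitive operations on booleans, reals (comparison, equality) and list
constructors/pattern matches cost O(1) and are charged inside the unit cost of the call.\<close>

definition T_st_union :: "st \<Rightarrow> st \<Rightarrow> nat" where "T_st_union s t = 1"
definition T_st_closed :: "st \<Rightarrow> nat" where "T_st_closed s = 1"
definition T_st_single :: "bool \<Rightarrow> bool \<Rightarrow> nat" where "T_st_single lo hi = 1"

fun T_st_start :: "real \<Rightarrow> real \<times> real \<Rightarrow> nat" where
  "T_st_start v (m, M) = 1 + (if m \<le> v \<and> v \<le> M then T_st_single (v = m) (v = M) else 0)"

fun T_st_ext :: "real \<Rightarrow> real \<times> real \<Rightarrow> st \<Rightarrow> nat" where
  "T_st_ext v (m, M) (a, b, c, d) =
     1 + (if m \<le> v \<and> v \<le> M then
        (let lo = (v = m); hi = (v = M) in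
          3 * T_st_union st_empty st_empty
          + (if a then T_st_single lo hi else 0) + (if b then T_st_single lo True else 0)
          + (if c then T_st_single True hi else 0) + (if d then T_st_single True True else 0))
      else 0)"

fun T_dp_col :: "real \<Rightarrow> bool \<Rightarrow> bool \<Rightarrow> (real \<times> real) list \<Rightarrow> st list \<Rightarrow> nat" where
  "T_dp_col v cp cn (q # qs) (s # ss) =
     (let n = st_union (st_ext v q s) (if cp \<or> cn then st_start v q else st_empty)
      in 1 + T_st_ext v q s + (if cp \<or> cn then T_st_start v q else 0)
           + T_st_union (st_ext v q s) (if cp \<or> cn then st_start v q else st_empty)
           + T_st_closed s + T_st_closed n + T_dp_col v (st_closed s) (st_closed n) qs ss)"
| "T_dp_col v cp cn qs ss = 1"

fun T_empty_col :: "(real \<times> real) list \<Rightarrow> nat" where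
  "T_empty_col [] = 1"
| "T_empty_col (q # qs) = 1 + T_empty_col qs"

fun T_dp_run :: "(real \<times> real) list \<Rightarrow> st list \<Rightarrow> real list \<Rightarrow> nat" where
  "T_dp_run p c [] = 1"
| "T_dp_run p c (v # vs) = 1 + T_dp_col v False False p c + T_dp_run p (dp_col v False False p c) vs"

fun T_last_closed :: "st list \<Rightarrow> nat" where
  "T_last_closed [] = 1"
| "T_last_closed [s] = 1 + T_st_closed s"
| "T_last_closed (s # t # ss) = 1 + T_last_closed (t # ss)"

fun T_decide_profile :: "real list \<Rightarrow> (real \<times> real) list \<Rightarrow> nat" where
  "T_decide_profile [] p = 1"
| "T_decide_profile (v # vs) p =
     1 + T_empty_col p + T_dp_col v True False p (empty_col p)
       + T_dp_run p (dp_col v True False p (empty_col p)) vs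
       + T_last_closed (dp_run p (dp_col v True False p (empty_col p)) vs)"

end

theory Submission
  imports Defs
begin

definition step :: "nat \<times> nat \<Rightarrow> nat \<times> nat \<Rightarrow> bool" where
  "step u w \<longleftrightarrow> (fst w = fst u \<or> fst w = fst u + 1) \<and> (snd w = snd u \<or> snd w = snd u + 1) \<and> w \<noteq> u"

fun ok :: "(nat \<times> nat) list \<Rightarrow> bool" where
  "ok (u # w # t) = (step u w \<and> ok (w # t))"
| "ok _ = True"

lemma ok_iff: "(\<forall>k. Suc k < length T \<longrightarrow> step (T ! k) (T ! Suc k)) \<longleftrightarrow> ok T"
proof (induction T rule: ok.induct)
  case (1 u w t)
  have "(\<forall>k. Suc k < length (u # w # t) \<longrightarrow> step ((u # w # t) ! k) ((u # w # t) ! Suc k))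
     \<longleftrightarrow> step u w \<and> (\<forall>k. Suc k < length (w # t) \<longrightarrow> step ((w # t) ! k) ((w # t) ! Suc k))"
    (is "?L \<longleftrightarrow> ?R")
  proof
    assume ?L
    then show ?R by (metis Suc_less_eq length_Cons nth_Cons_0 nth_Cons_Suc zero_less_Suc)
  next
    assume ?R
    show ?L
    proof (intro allI impI)
      fix k assume "Suc k < length (u # w # t)"
      then show "step ((u # w # t) ! k) ((u # w # t) ! Suc k)"
        using \<open>?R\<close> by (cases k) auto
    qed
  qed
  then show ?case using 1 by simp
qed auto

lemma is_traversal_iff: "is_traversal z l T \<longleftrightarrow> T \<noteq> [] \<and> hd T = (1,1) \<and> last T = (z,l) \<and> ok T"
  unfolding is_traversal_def ok_iff[symmetric] step_def by blast

lemma ok_snoc: "ok (P @ [q]) \<longleftrightarrow> ok P \<and> (P \<noteq> [] \<longrightarrow> step (last P) q)"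
  by (induction P rule: ok.induct) auto

lemma ok_butlast: "ok (P @ [q]) \<Longrightarrow> ok P" by (simp add: ok_snoc)

lemma bounds:
  "ok P \<Longrightarrow> P \<noteq> [] \<Longrightarrow> hd P = (1,1) \<Longrightarrow> last P = (i,j) \<Longrightarrow> (a,b) \<in> set P
   \<Longrightarrow> 1 \<le> a \<and> a \<le> i \<and> 1 \<le> b \<and> b \<le> j"
proof (induction P arbitrary: i j a b rule: rev_induct)
  case Nil then show ?case by simp
next
  case (snoc q P)
  show ?case
  proof (cases "P = []")
    case True then show ?thesis using snoc.prems by auto
  next
    case False
    obtain i' j' where l: "last P = (i',j')" by fastforce
    have st: "step (i',j') (i,j)" using snoc.prems False l by (simp add: ok_snoc)
    have hP: "hd P = (1,1)" using snoc.prems False by simp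
    have IH: "\<And>a b. (a,b) \<in> set P \<Longrightarrow> 1 \<le> a \<and> a \<le> i' \<and> 1 \<le> b \<and> b \<le> j'"
      using snoc.IH[OF ok_butlast[OF snoc.prems(1)] False hP l] by blast
    have lst: "(i',j') \<in> set P" using l False last_in_set by metis
    from IH[OF this] have "1 \<le> i' \<and> 1 \<le> j'" by simp
    moreover have "q = (i,j)" using snoc.prems by simp
    moreover have "(a,b) \<in> set P \<or> (a,b) = (i,j)" using snoc.prems(5) \<open>q = (i,j)\<close> by auto
    moreover have "i' \<le> i \<and> j' \<le> j" using st unfolding step_def by auto
    ultimately show ?thesis using IH[of a b] by force
  qed
qed

lemma coverage:
  "ok P \<Longrightarrow> P \<noteq> [] \<Longrightarrow> hd P = (1,1) \<Longrightarrow> last P = (i,j) \<Longrightarrow> 1 \<le> b \<Longrightarrow> b \<le> j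
   \<Longrightarrow> \<exists>a. (a,b) \<in> set P"
proof (induction P arbitrary: i j rule: rev_induct)
  case Nil then show ?case by simp
next
  case (snoc q P)
  show ?case
  proof (cases "P = []")
    case True then show ?thesis using snoc.prems by auto
  next
    case False
    obtain i' j' where l: "last P = (i',j')" by fastforce
    have st: "step (i',j') (i,j)" using snoc.prems False l by (simp add: ok_snoc)
    have hP: "hd P = (1,1)" using snoc.prems False by simp
    have q: "q = (i,j)" using snoc.prems by simp
    show ?thesis
    proof (cases "b \<le> j'")
      case True
      then show ?thesis using snoc.IH[OF ok_butlast[OF snoc.prems(1)] False hP l snoc.prems(5)] by auto
    next
      case False
      then have "b = j" using st snoc.prems(6) unfolding step_def by auto
      then show ?thesis using q by auto
    qed
  qed
qed


definition inr :: "real list \<Rightarrow> (real \<times> real) list \<Rightarrow> nat \<Rightarrow> nat \<Rightarrow> bool" where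
  "inr x p a b \<longleftrightarrow> fst (p ! (b-1)) \<le> x ! (a-1) \<and> x ! (a-1) \<le> snd (p ! (b-1))"

definition hmin :: "real list \<Rightarrow> (real \<times> real) list \<Rightarrow> (nat \<times> nat) list \<Rightarrow> nat \<Rightarrow> bool" where
  "hmin x p P b \<longleftrightarrow> (\<exists>a. (a,b) \<in> set P \<and> x ! (a-1) = fst (p ! (b-1)))"

definition hmax :: "real list \<Rightarrow> (real \<times> real) list \<Rightarrow> (nat \<times> nat) list \<Rightarrow> nat \<Rightarrow> bool" where
  "hmax x p P b \<longleftrightarrow> (\<exists>a. (a,b) \<in> set P \<and> x ! (a-1) = snd (p ! (b-1)))"

definition Good :: "real list \<Rightarrow> (real \<times> real) list \<Rightarrow> nat \<Rightarrow> nat \<Rightarrow> bool \<Rightarrow> bool \<Rightarrow> bool" where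
  "Good x p i j lo hi \<longleftrightarrow> (\<exists>P. P \<noteq> [] \<and> hd P = (1,1) \<and> ok P \<and> last P = (i,j) \<and>
     (\<forall>(a,b) \<in> set P. inr x p a b) \<and> (\<forall>b. 1 \<le> b \<and> b < j \<longrightarrow> hmin x p P b \<and> hmax x p P b) \<and>
     lo = hmin x p P j \<and> hi = hmax x p P j)"

lemma Good_0: "\<not> Good x p 0 j lo hi" "\<not> Good x p i 0 lo hi"
  unfolding Good_def by (metis bounds last_in_set not_one_le_zero)+

lemma hmin_snoc: "hmin x p (P @ [(i,j)]) b \<longleftrightarrow> hmin x p P b \<or> (b = j \<and> x ! (i-1) = fst (p ! (b-1)))"
  by (auto simp: hmin_def)
lemma hmax_snoc: "hmax x p (P @ [(i,j)]) b \<longleftrightarrow> hmax x p P b \<or> (b = j \<and> x ! (i-1) = snd (p ! (b-1)))"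
  by (auto simp: hmax_def)

lemma hmin_none: "(\<forall>(a,b') \<in> set P. b' < b) \<Longrightarrow> \<not> hmin x p P b"
  by (auto simp: hmin_def)
lemma hmax_none: "(\<forall>(a,b') \<in> set P. b' < b) \<Longrightarrow> \<not> hmax x p P b"
  by (auto simp: hmax_def)

lemma snoc_props:
  "P \<noteq> [] \<Longrightarrow> hd P = (1,1) \<Longrightarrow> ok P \<Longrightarrow> last P = u \<Longrightarrow> step u w \<Longrightarrow>
   P @ [w] \<noteq> [] \<and> hd (P @ [w]) = (1,1) \<and> ok (P @ [w]) \<and> last (P @ [w]) = w"
  by (simp add: ok_snoc)

lemma Good_rec:
  assumes "1 \<le> i" "1 \<le> j"
  shows "Good x p i j lo hi \<longleftrightarrow> inr x p i j \<and>
     ((((i = 1 \<and> j = 1) \<or> (1 < j \<and> Good x p (i-1) (j-1) True True) \<or> (1 < j \<and> Good x p i (j-1) True True))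
        \<and> lo = (x ! (i-1) = fst (p ! (j-1))) \<and> hi = (x ! (i-1) = snd (p ! (j-1))))
      \<or> (\<exists>lo' hi'. Good x p (i-1) j lo' hi' \<and> lo = (lo' \<or> x ! (i-1) = fst (p ! (j-1)))
            \<and> hi = (hi' \<or> x ! (i-1) = snd (p ! (j-1)))))" (is "?L \<longleftrightarrow> ?R")
proof
  assume ?L
  then obtain P where P: "P \<noteq> []" "hd P = (1,1)" "ok P" "last P = (i,j)"
     "\<forall>(a,b) \<in> set P. inr x p a b" "\<forall>b. 1 \<le> b \<and> b < j \<longrightarrow> hmin x p P b \<and> hmax x p P b"
     "lo = hmin x p P j" "hi = hmax x p P j"
    unfolding Good_def by blast
  obtain P' q where Pq: "P = P' @ [q]" using P(1) by (metis rev_exhaust)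
  have q: "q = (i,j)" using P(4) Pq by simp
  have inrij: "inr x p i j" using P(5) P(1,4) last_in_set by fastforce
  show ?R
  proof (cases "P' = []")
    case True
    then have "(i,j) = (1,1)" using P(2) Pq q by simp
    then have ij: "i = 1" "j = 1" by auto
    have "lo = (x ! (i-1) = fst (p ! (j-1)))" "hi = (x ! (i-1) = snd (p ! (j-1)))"
      using P(7,8) Pq q True by (auto simp: hmin_def hmax_def)
    then show ?R using inrij ij by blast
  next
    case False
    obtain i' j' where l: "last P' = (i',j')" by fastforce
    have st: "step (i',j') (i,j)" using P(3) Pq q False l by (simp add: ok_snoc)
    have hP: "hd P' = (1,1)" using P(2) Pq False by simp
    have okP: "ok P'" using P(3) Pq ok_butlast by blast
    have bd: "\<And>a b. (a,b) \<in> set P' \<Longrightarrow> 1 \<le> a \<and> a \<le> i' \<and> 1 \<le> b \<and> b \<le> j'"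
      using bounds[OF okP False hP l] by blast
    have ij': "1 \<le> i'" "1 \<le> j'" using bd[of i' j'] l False last_in_set by fastforce+
    have inrP': "\<forall>(a,b) \<in> set P'. inr x p a b" using P(5) Pq by auto
    show ?R
    proof (cases "j' = j")
      case True
      then have i': "i' = i - 1" using st unfolding step_def by auto
      have "Good x p (i-1) j (hmin x p P' j) (hmax x p P' j)"
        unfolding Good_def
      proof (intro exI[of _ P'] conjI)
        show "\<forall>b. 1 \<le> b \<and> b < j \<longrightarrow> hmin x p P' b \<and> hmax x p P' b"
          using P(6) Pq q by (auto simp: hmin_snoc hmax_snoc)
      qed (use False hP okP l True i' inrP' in auto)
      moreover have "lo = (hmin x p P' j \<or> x ! (i-1) = fst (p ! (j-1)))"
          "hi = (hmax x p P' j \<or> x ! (i-1) = snd (p ! (j-1)))"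
        using P(7,8) Pq q by (auto simp: hmin_snoc hmax_snoc)
      ultimately show ?R using inrij by blast
    next
      case False2: False
      then have jj: "j' = j - 1" "1 < j" using st ij' unfolding step_def by auto
      have G: "Good x p i' (j-1) True True"
        unfolding Good_def
      proof (intro exI[of _ P'] conjI)
        show "\<forall>b. 1 \<le> b \<and> b < j - 1 \<longrightarrow> hmin x p P' b \<and> hmax x p P' b"
          using P(6) Pq q by (auto simp: hmin_snoc hmax_snoc)
        have h: "hmin x p P (j-1) \<and> hmax x p P (j-1)" using P(6) jj by simp
        show "True = hmin x p P' (j-1)" "True = hmax x p P' (j-1)"
          using h jj Pq q by (auto simp: hmin_snoc hmax_snoc)
      qed (use False hP okP l jj inrP' in auto)
      have none: "\<forall>(a,b') \<in> set P'. b' < j" using bd jj by fastforce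
      have "lo = (x ! (i-1) = fst (p ! (j-1)))" "hi = (x ! (i-1) = snd (p ! (j-1)))"
        using P(7,8) Pq q hmin_none[OF none] hmax_none[OF none] by (auto simp: hmin_snoc hmax_snoc)
      moreover have "i' = i \<or> i' = i - 1" using st unfolding step_def by auto
      ultimately show ?R using inrij G jj by blast
    qed
  qed
next
  assume R: ?R
  have inrij: "inr x p i j" using R by blast
  have ext: "Good x p i j (hmin x p P' j \<or> x ! (i-1) = fst (p ! (j-1))) (hmax x p P' j \<or> x ! (i-1) = snd (p ! (j-1)))"
    if "P' \<noteq> []" "hd P' = (1,1)" "ok P'" "last P' = u" "step u (i,j)"
       "\<forall>(a,b) \<in> set P'. inr x p a b" "\<forall>b. 1 \<le> b \<and> b < j \<longrightarrow> hmin x p P' b \<and> hmax x p P' b"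
    for P' u
    unfolding Good_def
  proof (intro exI[of _ "P' @ [(i,j)]"] conjI)
    show "\<forall>b. 1 \<le> b \<and> b < j \<longrightarrow> hmin x p (P' @ [(i, j)]) b \<and> hmax x p (P' @ [(i, j)]) b"
      using that(7) by (auto simp: hmin_snoc hmax_snoc)
    show "\<forall>(a,b) \<in> set (P' @ [(i,j)]). inr x p a b" using that(6) inrij by auto
  qed (use snoc_props[OF that(1-5)] in \<open>auto simp: hmin_snoc hmax_snoc\<close>)
  have start: "Good x p i j (x ! (i-1) = fst (p ! (j-1))) (x ! (i-1) = snd (p ! (j-1)))"
    if "1 < j" "Good x p i' (j-1) True True" "step (i', j-1) (i,j)" for i'
  proof -
    from that(2) obtain P' where P': "P' \<noteq> []" "hd P' = (1,1)" "ok P'" "last P' = (i', j-1)"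
     "\<forall>(a,b) \<in> set P'. inr x p a b" "\<forall>b. 1 \<le> b \<and> b < j - 1 \<longrightarrow> hmin x p P' b \<and> hmax x p P' b"
     "hmin x p P' (j-1)" "hmax x p P' (j-1)"
      unfolding Good_def by blast
    have all: "\<forall>b. 1 \<le> b \<and> b < j \<longrightarrow> hmin x p P' b \<and> hmax x p P' b"
    proof (intro allI impI)
      fix b assume "1 \<le> b \<and> b < j"
      then show "hmin x p P' b \<and> hmax x p P' b" using P'(6,7,8) by (cases "b = j - 1") auto
    qed
    have none: "\<forall>(a,b') \<in> set P'. b' < j"
      using bounds[OF P'(3,1,2,4)] that(1) by fastforce
    show ?thesis using ext[OF P'(1-4) that(3) P'(5) all] hmin_none[OF none] hmax_none[OF none] by simp
  qed
  show ?L
  proof -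
    from R consider
      (a) "i = 1" "j = 1" "lo = (x ! (i-1) = fst (p ! (j-1)))" "hi = (x ! (i-1) = snd (p ! (j-1)))"
    | (b) "1 < j" "Good x p (i-1) (j-1) True True" "lo = (x ! (i-1) = fst (p ! (j-1)))" "hi = (x ! (i-1) = snd (p ! (j-1)))"
    | (c) "1 < j" "Good x p i (j-1) True True" "lo = (x ! (i-1) = fst (p ! (j-1)))" "hi = (x ! (i-1) = snd (p ! (j-1)))"
    | (d) lo' hi' where "Good x p (i-1) j lo' hi'" "lo = (lo' \<or> x ! (i-1) = fst (p ! (j-1)))"
            "hi = (hi' \<or> x ! (i-1) = snd (p ! (j-1)))"
      by blast
    then show ?thesis
    proof cases
      case a
      show ?thesis unfolding Good_def
        by (rule exI[of _ "[(1,1)]"]) (use a inrij in \<open>auto simp: hmin_def hmax_def\<close>)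
    next
      case b
      have "i - 1 \<noteq> 0" using b(2) Good_0 by metis
      then have "step (i-1, j-1) (i,j)" using b(1) unfolding step_def by auto
      then show ?thesis using start[OF b(1,2)] b(3,4) by simp
    next
      case c
      have "step (i, j-1) (i,j)" using c(1) unfolding step_def by auto
      then show ?thesis using start[OF c(1,2)] c(3,4) by simp
    next
      case d
      have "i - 1 \<noteq> 0" using d(1) Good_0 by metis
      then have st: "step (i-1, j) (i,j)" unfolding step_def by auto
      from d(1) obtain P' where P': "P' \<noteq> []" "hd P' = (1,1)" "ok P'" "last P' = (i-1, j)"
       "\<forall>(a,b) \<in> set P'. inr x p a b" "\<forall>b. 1 \<le> b \<and> b < j \<longrightarrow> hmin x p P' b \<and> hmax x p P' b"
       "lo' = hmin x p P' j" "hi' = hmax x p P' j"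
        unfolding Good_def by blast
      show ?thesis using ext[OF P'(1-4) st P'(5,6)] P'(7,8) d(2,3) by simp
    qed
  qed
qed


definition enc :: "(bool \<Rightarrow> bool \<Rightarrow> bool) \<Rightarrow> st" where
  "enc S = (S False False, S False True, S True False, S True True)"

lemma enc_step:
  "st_union (st_ext v (m, M) (enc S)) (if c then st_start v (m, M) else st_empty) =
   enc (\<lambda>lo hi. (m \<le> v \<and> v \<le> M) \<and> ((c \<and> lo = (v = m) \<and> hi = (v = M)) \<or>
        (\<exists>lo' hi'. S lo' hi' \<and> lo = (lo' \<or> v = m) \<and> hi = (hi' \<or> v = M))))"
  by (cases "m \<le> v \<and> v \<le> M"; cases c; cases "v = m"; cases "v = M")
     (auto simp: enc_def st_empty_def Let_def ex_bool_eq)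

lemma st_closed_enc: "st_closed (enc S) = S True True" by (simp add: enc_def)

definition col :: "real list \<Rightarrow> (real \<times> real) list \<Rightarrow> nat \<Rightarrow> st list" where
  "col x p i = map (\<lambda>j. enc (Good x p i (Suc j))) [0..<length p]"

lemma empty_col_col0: "empty_col p = col x p 0"
proof -
  have "empty_col p = replicate (length p) st_empty" by (induction p) auto
  also have "\<dots> = col x p 0"
    unfolding col_def by (simp add: enc_def Good_0 st_empty_def map_replicate_const)
  finally show ?thesis .
qed

lemma Good_enc:
  assumes "1 \<le> i" "k < length p"
  shows "enc (Good x p i (Suc k)) =
    st_union (st_ext (x ! (i-1)) (p ! k) (enc (Good x p (i-1) (Suc k))))
      (if (if k = 0 then i = 1 else Good x p (i-1) k True True) \<or> (k \<noteq> 0 \<and> Good x p i k True True)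
       then st_start (x ! (i-1)) (p ! k) else st_empty)"
proof -
  obtain m M where q: "p ! k = (m, M)" by fastforce
  show ?thesis
    unfolding q enc_step
    apply (rule arg_cong[where f = enc])
    apply (rule ext)+
    apply (subst Good_rec[OF assms(1)])
     apply simp
    using q by (auto simp: inr_def)
qed

lemma dp_col_correct:
  assumes "1 \<le> i" "k \<le> length p"
  shows "dp_col (x ! (i-1)) (if k = 0 then i = 1 else Good x p (i-1) k True True)
           (k \<noteq> 0 \<and> Good x p i k True True) (drop k p) (drop k (col x p (i-1))) = drop k (col x p i)"
  using assms(2)
proof (induction "length p - k" arbitrary: k)
  case 0
  then have "k = length p" by simp
  then show ?case by (simp add: col_def)
next
  case (Suc n)
  then have kl: "k < length p" by simp
  have dp: "drop k p = p ! k # drop (Suc k) p" using kl by (simp add: Cons_nth_drop_Suc)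
  have dc: "drop k (col x p (i-1)) = enc (Good x p (i-1) (Suc k)) # drop (Suc k) (col x p (i-1))"
    using kl by (simp add: Cons_nth_drop_Suc[symmetric] col_def del: upt_Suc)
  have dc2: "drop k (col x p i) = enc (Good x p i (Suc k)) # drop (Suc k) (col x p i)"
    using kl by (simp add: Cons_nth_drop_Suc[symmetric] col_def del: upt_Suc)
  have IH: "dp_col (x ! (i-1)) (Good x p (i-1) (Suc k) True True) (Good x p i (Suc k) True True)
      (drop (Suc k) p) (drop (Suc k) (col x p (i-1))) = drop (Suc k) (col x p i)"
    using Suc.hyps(1)[of "Suc k"] Suc.hyps(2) kl by simp
  show ?case
    unfolding dp dc dc2
    apply (simp only: dp_col.simps(1) Let_def)
    apply (simp only: Good_enc[OF assms(1) kl, symmetric] st_closed_enc IH)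
    done
qed


lemma dp_run_correct:
  "1 \<le> i \<Longrightarrow> i \<le> length x \<Longrightarrow> vs = drop i x \<Longrightarrow> dp_run p (col x p i) vs = col x p (length x)"
proof (induction vs arbitrary: i)
  case Nil
  then have "i = length x" by simp
  then show ?case by simp
next
  case (Cons w vs)
  have il: "i < length x" using Cons.prems(3) by (metis drop_all leI list.distinct(1))
  have w: "w = x ! i" and vs: "vs = drop (Suc i) x"
    using Cons.prems(3) il by (metis Cons_nth_drop_Suc list.inject)+
  have "dp_col w False False p (col x p i) = col x p (Suc i)"
    using dp_col_correct[of "Suc i" 0 p x] Cons.prems(1) w by simp
  then show ?case using Cons.IH[of "Suc i"] il vs by simp
qed

lemma last_closed_last: "c \<noteq> [] \<Longrightarrow> last_closed c = st_closed (last c)"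
  by (induction c rule: last_closed.induct) auto

lemma decide_Good:
  assumes "x \<noteq> []"
  shows "decide_profile x p = Good x p (length x) (length p) True True"
proof -
  obtain v vs where x: "x = v # vs" using assms by (cases x) auto
  have c0: "dp_col (x ! (1-1)) True False (drop 0 p) (drop 0 (col x p (1-1))) = drop 0 (col x p 1)"
    using dp_col_correct[of 1 0 p x] by (simp only: if_True refl simp_thms le_refl zero_le)
  have c1: "dp_col v True False p (empty_col p) = col x p 1"
    using c0 x by (simp add: empty_col_col0[of p x])
  have r: "dp_run p (col x p 1) vs = col x p (length x)"
    by (rule dp_run_correct) (use x in auto)
  have "decide_profile x p = last_closed (dp_run p (dp_col v True False p (empty_col p)) vs)"
    unfolding x by (simp only: decide_profile.simps)
  also have "\<dots> = last_closed (col x p (length x))"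
    unfolding c1 r ..
  finally have "decide_profile x p = last_closed (col x p (length x))" .
  also have "\<dots> = Good x p (length x) (length p) True True"
  proof (cases "p = []")
    case True
    then show ?thesis by (simp add: col_def Good_0)
  next
    case False
    then have "col x p (length x) \<noteq> []" by (simp add: col_def)
    moreover have "last (col x p (length x)) = enc (Good x p (length x) (length p))"
      using False by (simp add: col_def last_map)
    ultimately show ?thesis by (simp add: last_closed_last st_closed_enc)
  qed
  finally show ?thesis .
qed

lemma profile_iff:
  "profile l x T = p \<longleftrightarrow> length p = l \<and>
     (\<forall>j<l. Min (sector x T (Suc j)) = fst (p ! j) \<and> Max (sector x T (Suc j)) = snd (p ! j))"
proof -
  have len: "length (profile l x T) = l" by (simp add: profile_def)
  have nth: "profile l x T ! j = (Min (sector x T (Suc j)), Max (sector x T (Suc j)))" if "j < l" for j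
    using that unfolding profile_def by (simp add: nth_upt del: upt_Suc)
  show ?thesis
    unfolding list_eq_iff_nth_eq len
    using nth by (auto simp: prod_eq_iff)
qed

lemma sector_finite: "finite (sector x T j)"
proof -
  have e: "sector x T j = (\<lambda>i. x ! (i - 1)) ` {i. (i,j) \<in> set T}"
    unfolding sector_def by (rule setcompr_eq_image)
  have "{i. (i,j) \<in> set T} \<subseteq> fst ` set T"
  proof
    fix i assume "i \<in> {i. (i,j) \<in> set T}"
    then have "(i,j) \<in> set T" by simp
    then show "i \<in> fst ` set T" by (rule rev_image_eqI) simp
  qed
  then have "finite {i. (i,j) \<in> set T}" by (rule finite_subset) simp
  then show ?thesis unfolding e by (rule finite_imageI)
qed

lemma trav_equiv:
  "Good x p (length x) (length p) True True \<longleftrightarrow>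
   (\<exists>T \<in> traversals (length x) (length p). profile (length p) x T = p)"
proof
  assume "Good x p (length x) (length p) True True"
  then obtain P where P: "P \<noteq> []" "hd P = (1,1)" "ok P" "last P = (length x, length p)"
     "\<forall>(a,b) \<in> set P. inr x p a b" "\<forall>b. 1 \<le> b \<and> b < length p \<longrightarrow> hmin x p P b \<and> hmax x p P b"
     "hmin x p P (length p)" "hmax x p P (length p)"
    unfolding Good_def by blast
  have T: "P \<in> traversals (length x) (length p)"
    using P by (simp add: traversals_def is_traversal_iff)
  have "Min (sector x P (Suc j)) = fst (p ! j) \<and> Max (sector x P (Suc j)) = snd (p ! j)"
    if j: "j < length p" for j
  proof -
    have h: "hmin x p P (Suc j) \<and> hmax x p P (Suc j)"
      using P(6,7,8) j by (cases "Suc j = length p") auto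
    have lb: "\<And>y. y \<in> sector x P (Suc j) \<Longrightarrow> fst (p ! j) \<le> y \<and> y \<le> snd (p ! j)"
      using P(5) by (fastforce simp: sector_def inr_def)
    obtain a a' where "(a, Suc j) \<in> set P" "x ! (a-1) = fst (p ! j)"
        "(a', Suc j) \<in> set P" "x ! (a'-1) = snd (p ! j)"
      using h by (auto simp: hmin_def hmax_def)
    then have "fst (p ! j) \<in> sector x P (Suc j)" "snd (p ! j) \<in> sector x P (Suc j)"
      unfolding sector_def by (metis (mono_tags, lifting) mem_Collect_eq)+
    then show ?thesis using lb sector_finite
      by (metis Min_eqI Max_eqI)
  qed
  then show "\<exists>T \<in> traversals (length x) (length p). profile (length p) x T = p"
    using T by (auto simp: profile_iff)
next
  assume "\<exists>T \<in> traversals (length x) (length p). profile (length p) x T = p"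
  then obtain T where T: "T \<noteq> []" "hd T = (1,1)" "last T = (length x, length p)" "ok T"
    and pr: "\<forall>j<length p. Min (sector x T (Suc j)) = fst (p ! j) \<and> Max (sector x T (Suc j)) = snd (p ! j)"
    by (auto simp: traversals_def is_traversal_iff profile_iff)
  have bd: "\<And>a b. (a,b) \<in> set T \<Longrightarrow> 1 \<le> a \<and> a \<le> length x \<and> 1 \<le> b \<and> b \<le> length p"
    using bounds[OF T(4,1,2,3)] by blast
  have inrT: "\<forall>(a,b) \<in> set T. inr x p a b"
  proof (intro ballI, clarify)
    fix a b assume ab: "(a,b) \<in> set T"
    then have b: "1 \<le> b" "b \<le> length p" using bd by auto
    have mem: "x ! (a-1) \<in> sector x T b" using ab by (auto simp: sector_def)
    have "Min (sector x T b) = fst (p ! (b-1))" "Max (sector x T b) = snd (p ! (b-1))"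
      using pr[rule_format, of "b-1"] b by auto
    then show "inr x p a b" using mem sector_finite unfolding inr_def by (metis Min_le Max_ge)
  qed
  have hm: "hmin x p T b \<and> hmax x p T b" if b: "1 \<le> b" "b \<le> length p" for b
  proof -
    obtain a where "(a,b) \<in> set T" using coverage[OF T(4,1,2,3) b] by blast
    then have ne: "sector x T b \<noteq> {}" by (auto simp: sector_def)
    have "Min (sector x T b) = fst (p ! (b-1))" "Max (sector x T b) = snd (p ! (b-1))"
      using pr[rule_format, of "b-1"] b by auto
    moreover have "Min (sector x T b) \<in> sector x T b" "Max (sector x T b) \<in> sector x T b"
      using ne sector_finite by (auto intro: Min_in Max_in)
    ultimately show ?thesis by (auto simp: sector_def hmin_def hmax_def)
  qed
  have lp: "1 \<le> length p" using bd[of "length x" "length p"] T(1,3) last_in_set by metis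
  have hml: "hmin x p T (length p)" "hmax x p T (length p)" using hm[OF lp order.refl] by auto
  show "Good x p (length x) (length p) True True"
    unfolding Good_def
    apply (rule exI[of _ T])
    using T inrT hm hml by (auto simp: Suc_le_eq)
qed



lemma T_ext_le: "T_st_ext v q s \<le> 8"
  by (cases q; cases s) (auto simp: T_st_union_def T_st_single_def Let_def)

lemma T_start_le: "T_st_start v q \<le> 2"
  by (cases q) (auto simp: T_st_single_def)

lemma T_dp_col_le: "T_dp_col v cp cn qs ss \<le> 14 * length qs + 1"
proof (induction qs arbitrary: cp cn ss)
  case (Cons q qs)
  show ?case
  proof (cases ss)
    case (Cons s ss')
    have "T_st_ext v q s \<le> 8" by (rule T_ext_le)
    moreover have "T_st_start v q \<le> 2" by (rule T_start_le)
    moreover note Cons.IH[of "st_closed s" "st_closed (st_union (st_ext v q s) (st_start v q))" ss']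
       Cons.IH[of "st_closed s" "st_closed (st_union (st_ext v q s) st_empty)" ss']
    ultimately show ?thesis using Cons by (simp add: Let_def T_st_union_def T_st_closed_def)
  qed simp
qed simp

lemma T_empty_col: "T_empty_col p = length p + 1"
  by (induction p) auto

lemma len_dp_col: "length (dp_col v cp cn qs ss) \<le> length qs"
  by (induction v cp cn qs ss rule: dp_col.induct) (auto simp: Let_def)

lemma T_dp_run_le: "T_dp_run p c vs \<le> length vs * (14 * length p + 2) + 1"
proof (induction vs arbitrary: c)
  case (Cons v vs)
  have "T_dp_col v False False p c \<le> 14 * length p + 1" by (rule T_dp_col_le)
  then show ?case using Cons[of "dp_col v False False p c"] by simp
qed simp

lemma len_dp_run: "length (dp_run p c vs) \<le> max (length c) (length p)"
proof (induction vs arbitrary: c)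
  case (Cons v vs)
  then show ?case using len_dp_col[of v False False p c] by (simp add: le_max_iff_disj) (meson le_trans max.cobounded2 Cons)
qed simp

lemma T_last_closed_le: "T_last_closed c \<le> length c + 1"
  by (induction c rule: T_last_closed.induct) (auto simp: T_st_closed_def)

lemma T_decide_le:
  assumes "x \<noteq> []" "p \<noteq> []"
  shows "T_decide_profile x p \<le> 40 * (length x * length p)"
proof -
  obtain v vs where x: "x = v # vs" using assms by (cases x) auto
  let ?c = "dp_col v True False p (empty_col p)"
  have a: "T_dp_col v True False p (empty_col p) \<le> 14 * length p + 1" by (rule T_dp_col_le)
  have b: "T_dp_run p ?c vs \<le> length vs * (14 * length p + 2) + 1" by (rule T_dp_run_le)
  have lc: "length ?c \<le> length p" by (rule len_dp_col)
  have c: "T_last_closed (dp_run p ?c vs) \<le> length p + 1"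
    using T_last_closed_le[of "dp_run p ?c vs"] len_dp_run[of p ?c vs] lc by simp
  have T: "T_decide_profile x p \<le> 5 + 16 * length p + length vs * (14 * length p + 2)"
    using a b c x by (simp add: T_empty_col)
  have l1: "1 \<le> length p" using assms by (cases p) auto
  have "length vs * (14 * length p + 2) \<le> length vs * (16 * length p)"
    using l1 by (intro mult_le_mono2) simp
  moreover have "5 + 16 * length p \<le> 40 * length p" using l1 by simp
  ultimately have "T_decide_profile x p \<le> 40 * length p + length vs * (40 * length p)"
    using T by linarith
  also have "\<dots> = 40 * (length x * length p)" using x by (simp add: algebra_simps)
  finally show ?thesis .
qed

theorem lemma9p16:
  shows "(\<forall>(x :: real list) (p :: (real \<times> real) list).
            (\<forall>j < length p. fst (p ! j) \<in> set x \<and> snd (p ! j) \<in> set x) \<longrightarrow>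
            (decide_profile x p \<longleftrightarrow>
               (\<exists>T \<in> traversals (length x) (length p). profile (length p) x T = p)))
       \<and> (\<exists>C :: nat. \<forall>(x :: real list) (p :: (real \<times> real) list).
            x \<noteq> [] \<longrightarrow> p \<noteq> [] \<longrightarrow> T_decide_profile x p \<le> C * (length x * length p))"
proof (intro conjI allI impI)
  fix x :: "real list" and p :: "(real \<times> real) list"
  show "decide_profile x p \<longleftrightarrow> (\<exists>T \<in> traversals (length x) (length p). profile (length p) x T = p)"
  proof (cases "x = []")
    case True
    have "\<not> (\<exists>T \<in> traversals 0 (length p). profile (length p) x T = p)"
    proof
      assume "\<exists>T \<in> traversals 0 (length p). profile (length p) x T = p"
      then obtain T where T: "T \<noteq> []" "hd T = (1,1)" "last T = (0, length p)" "ok T"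
        by (auto simp: traversals_def is_traversal_iff)
      show False using bounds[OF T(4,1,2,3), of 0 "length p"] T(1,3) last_in_set by fastforce
    qed
    then show ?thesis using True by simp
  next
    case False
    then show ?thesis using decide_Good[OF False] trav_equiv by simp
  qed
next
  show "\<exists>C :: nat. \<forall>(x :: real list) (p :: (real \<times> real) list).
            x \<noteq> [] \<longrightarrow> p \<noteq> [] \<longrightarrow> T_decide_profile x p \<le> C * (length x * length p)"
    using T_decide_le by blast
qed

end
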